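(* Let $\{\mathcal B_n\}_{n\in\omega}$ be an entwined family and $\mathcal H_n:=\mathbb H[\mathcal B_{n-1}]_n$ for $n\ge1$. Let $\sigma$ be an initial type. If either $n>\mathrm{order}(\sigma)$, or $n=\mathrm{order}(\sigma)$ and $\sigma$ is inactive, then $\mathcal H_n[\sigma]$ is a finite set.
   Context: Standing assumptions. $\Sigma_{\mathrm{bg}}$ is a first-order signature with a distinguished sort $W$ and a binary relation symbol $\le$ on $W$. All other sorts are written $S$ and are interpreted by a fixed structure $\mathcal A$ as finite sets. $\le$ is interpreted in $\mathcal A$ as a total order. $\Sigma_{\mathrm{fg}}$ is a finite set of higher-order predicate symbols, disjoint from $\Sigma_{\mathrm{bg}}$, each of initial type. $l:=\max\{\mathrm{order}(\rho)\mid X:\rho\in\Sigma_{\mathrm{fg}}\}$. For $i\ge1$, $\Sigma_i\subseteq\Sigma_{\mathrm{fg}}$ consists of the symbols whose type has order at most $i$. Types. Relational types are $\rho::=o\mid\sigma\to\rho$ and argument types are $\sigma::=S\mid W\mid\rho$. The order is given by $\mathrm{order}(S)=\mathrm{order}(W)=\mathrm{order}(o)=0$ and $\mathrm{order}(\sigma\to\tau)=\max(\mathrm{order}(\sigma)+1,\mathrm{order}(\tau))$. Initial types. A type $\sigma_1\to\cdots\to\sigma_n\to o$ is initial if: (O1) at most one $\sigma_j$ is $W$; (O2) if $\sigma_j=W$, then $\mathrm{order}(\sigma_i)<\mathrm{order}(\sigma_j\to\cdots\to\sigma_n\to o)$ for all $i<j$; (O3) each $\sigma_j$ is $S$, $W$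 or initial. It is active if some $\sigma_i=W$, and inactive otherwise. Active types are written $\xi$ and inactive ones $\nu$. Frames and structures. A frame $\mathcal H$ assigns to each type a set: $\mathcal H[S]=\mathcal A[S]$, $\mathcal H[W]=\mathcal A[W]$, $\mathcal H[o]=\mathbb B=\{0,1\}$, and $\mathcal H[\sigma_1\to\sigma_2]\subseteq[\mathcal H[\sigma_1]\to\mathcal H[\sigma_2]]$, where $[A\to B]$ is the set of all functions. $\mathcal S$ is the standard frame, using full function spaces. For $\Xi\subseteq\Sigma_{\mathrm{fg}}$, a $(\Xi,\mathcal H)$-structure $\mathcal B$ extends $\mathcal A$ by an element $X^{\mathcal B}\in\mathcal H[\rho]$ for each $X:\rho\in\Xi$. A $(\Xi_2,\mathcal H_2)$-structure $\mathcal B_2$ is an expansion of a $(\Xi_1,\mathcal H_1)$-structure $\mathcal B_1$ (with $\Xi_1\subseteq\Xi_2$) if $c^{\mathcal B_2}=c^{\mathcal B_1}$ for all $c\in\Xi_1$. Ordering on relations. $\le_o$ on $[U_n\to\cdots\to U_1\to\mathbb B]$ is defined by: $f\le_o g$ iff ($f=0$ or $g=1$) when $n=0$, and iff $f(x)\le_o g(x)$ for all $x$ otherwise. $\top$ is the constantly-$1$ relation. Entwined frame. For $n\ge1$ and a $(\Xi,\mathcal H)$-structure $\mathcal B$, $\mathbb H[\mathcal B]_n$ is defined by cases on $\sigma$: (i) If $\sigma$ is initial with $\mathrm{order}(\sigma)\le n-2$, or $\sigma$ is inactive, $S$, $W$ or $o$ with $\mathrm{order}(\sigma)\le n-1$: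 $\mathbb H[\mathcal B]_n[\sigma]:=\mathcal H[\sigma]$. (ii) If $\sigma$ is active with $\mathrm{order}(\sigma)=n-1$: $\mathbb H[\mathcal B]_n[W\to\nu]:=\{\top\}\cup\{X^{\mathcal B}\,\overline s\mid X:\overline\tau\to W\to\nu\in\Xi,\ s_i\in\mathcal H[\tau_i]\}$, and $\mathbb H[\mathcal B]_n[\sigma_1\to\xi]:=[\mathbb H[\mathcal B]_n[\sigma_1]\to\mathbb H[\mathcal B]_n[\xi]]$. (iii) If $\sigma$ is initial with $\mathrm{order}(\sigma)=n$: $\mathbb H[\mathcal B]_n[W\to\nu]:=\{f\in[\mathcal A[W]\to\mathbb H[\mathcal B]_n[\nu]]\mid\forall z\le^{\mathcal A}z'.\ f(z)\le_o f(z')\}$, and $\mathbb H[\mathcal B]_n[\sigma_1\to\sigma_2]:=[\mathbb H[\mathcal B]_n[\sigma_1]\to\mathbb H[\mathcal B]_n[\sigma_2]]$ for $\sigma_1\ne W$. (iv) Otherwise (non-initial, or order $>n$): full function space $[\mathbb H[\mathcal B]_n[\sigma_1]\to\mathbb H[\mathcal B]_n[\sigma_2]]$. Entwined family. $\{\mathcal B_n\}_{n\in\omega}$ is entwined if $\mathcal B_0$ is the unique $(\emptyset,\mathcal S)$-structure and each $\mathcal B_{n+1}$ is a $(\Sigma_{n+1},\mathbb H[\mathcal B_n]_{n+1})$-expansion of $\mathcal B_n$. An entwined structure is a member of some entwined family. *)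

theory Defs
  imports Main
begin

text \<open>Syntactic types over a type of sort names 's (the sorts S); TW is the
distinguished sort W, TO the type o of truth values.\<close>

datatype 's ty = TS 's | TW | TO | Arr "'s ty" "'s ty"

fun order :: "'s ty \<Rightarrow> nat" where
  "order (Arr a b) = max (order a + 1) (order b)"
| "order _ = 0"

text \<open>Nesting depth of arrows (only used to bound the size of the value universe).\<close>
fun depth :: "'s ty \<Rightarrow> nat" where
  "depth (Arr a b) = max (depth a) (depth b) + 1"
| "depth _ = 0"

fun args :: "'s ty \<Rightarrow> 's ty list" where
  "args (Arr a b) = a # args b"
| "args _ = []"

fun res :: "'s ty \<Rightarrow> 's ty" where
  "res (Arr a b) = res b"
| "res t = t"

lemma args_size: "x \<in> set (args t) \<Longrightarrow> size x < size t"
  by (induction t) auto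

definition O1 :: "'s ty list \<Rightarrow> bool" where
  "O1 xs = (length (filter (\<lambda>x. x = TW) xs) \<le> 1)"

definition O2 :: "'s ty list \<Rightarrow> bool" where
  "O2 xs = (\<forall>j<length xs. xs ! j = TW \<longrightarrow>
              (\<forall>i<j. order (xs ! i) < order (foldr Arr (drop j xs) TO)))"

function initial :: "'s ty \<Rightarrow> bool" where
  "initial t = (res t = TO \<and> O1 (args t) \<and> O2 (args t) \<and>
     (\<forall>x\<in>set (args t). (\<exists>s. x = TS s) \<or> x = TW \<or> initial x))"
  by pat_completeness auto
termination by (relation "measure size") (auto dest: args_size)

declare initial.simps [simp del]

definition active :: "'s ty \<Rightarrow> bool" where
  "active t = (initial t \<and> TW \<in> set (args t))"

definition inactive :: "'s ty \<Rightarrow> bool" where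
  "inactive t = (initial t \<and> TW \<notin> set (args t))"

text \<open>Values of all types live in one universe 'v; functional values are
elements v acting through bg_app v. A function with domain A is represented
by the (unique, by injectivity of bg_app) v with bg_app v x = bg_dflt off A.\<close>

record ('s, 'v) bgs =
  bg_S :: "'s \<Rightarrow> 'v set"
  bg_W :: "'v set"
  bg_le :: "'v \<Rightarrow> 'v \<Rightarrow> bool"
  bg_tt :: 'v
  bg_ff :: 'v
  bg_app :: "'v \<Rightarrow> 'v \<Rightarrow> 'v"
  bg_dflt :: 'v

definition fun_space :: "('s, 'v) bgs \<Rightarrow> 'v set \<Rightarrow> 'v set \<Rightarrow> 'v set" where
  "fun_space bg A B = {v. (\<forall>x\<in>A. bg_app bg v x \<in> B) \<and>
                          (\<forall>x. x \<notin> A \<longrightarrow> bg_app bg v x = bg_dflt bg)}"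

text \<open>Ordering <=_o on relations with domains U_n, ..., U_1 (listed outermost first).\<close>
fun le_rel :: "('s, 'v) bgs \<Rightarrow> 'v set list \<Rightarrow> 'v \<Rightarrow> 'v \<Rightarrow> bool" where
  "le_rel bg [] f g = (f = bg_ff bg \<or> g = bg_tt bg)"
| "le_rel bg (D # Ds) f g = (\<forall>x\<in>D. le_rel bg Ds (bg_app bg f x) (bg_app bg g x))"

fun top_rel :: "('s, 'v) bgs \<Rightarrow> 'v set list \<Rightarrow> 'v" where
  "top_rel bg [] = bg_tt bg"
| "top_rel bg (D # Ds) = (THE v. \<forall>x. bg_app bg v x = (if x \<in> D then top_rel bg Ds else bg_dflt bg))"

fun Std :: "('s, 'v) bgs \<Rightarrow> 's ty \<Rightarrow> 'v set" where
  "Std bg (TS s) = bg_S bg s"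
| "Std bg TW = bg_W bg"
| "Std bg TO = {bg_tt bg, bg_ff bg}"
| "Std bg (Arr a b) = fun_space bg (Std bg a) (Std bg b)"

definition bg_ok :: "('s, 'v) bgs \<Rightarrow> bool" where
  "bg_ok bg = ((\<forall>s. finite (bg_S bg s)) \<and>
     (\<forall>x\<in>bg_W bg. bg_le bg x x) \<and>
     (\<forall>x\<in>bg_W bg. \<forall>y\<in>bg_W bg. bg_le bg x y \<and> bg_le bg y x \<longrightarrow> x = y) \<and>
     (\<forall>x\<in>bg_W bg. \<forall>y\<in>bg_W bg. \<forall>z\<in>bg_W bg. bg_le bg x y \<and> bg_le bg y z \<longrightarrow> bg_le bg x z) \<and>
     (\<forall>x\<in>bg_W bg. \<forall>y\<in>bg_W bg. bg_le bg x y \<or> bg_le bg y x) \<and>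
     bg_tt bg \<noteq> bg_ff bg \<and>
     inj (bg_app bg))"

fun ulev :: "('s, 'v) bgs \<Rightarrow> nat \<Rightarrow> 'v set" where
  "ulev bg 0 = (\<Union>s. bg_S bg s) \<union> bg_W bg \<union> {bg_tt bg, bg_ff bg}"
| "ulev bg (Suc k) = ulev bg k \<union> \<Union>{fun_space bg A (ulev bg k) | A. A \<subseteq> ulev bg k}"

definition full_upto :: "('s, 'v) bgs \<Rightarrow> nat \<Rightarrow> bool" where
  "full_upto bg D = (\<forall>k<D. \<forall>A \<subseteq> ulev bg k. \<forall>f.
      (\<forall>x\<in>A. f x \<in> ulev bg k) \<and> (\<forall>x. x \<notin> A \<longrightarrow> f x = bg_dflt bg)
      \<longrightarrow> (\<exists>v. bg_app bg v = f))"

text \<open>EF bg ty n H Xi I sigma = H[B]_n[sigma] where B is the (Xi,H)-structure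
interpreting X in Xi by I X; ty gives the types of foreground symbols.\<close>

function EF :: "('s, 'v) bgs \<Rightarrow> ('x \<Rightarrow> 's ty) \<Rightarrow> nat \<Rightarrow> ('s ty \<Rightarrow> 'v set) \<Rightarrow> 'x set
                 \<Rightarrow> ('x \<Rightarrow> 'v) \<Rightarrow> 's ty \<Rightarrow> 'v set" where
  "EF bg ty n H Xi I \<sigma> =
    (if (initial \<sigma> \<and> order \<sigma> + 2 \<le> n) \<or>
        ((inactive \<sigma> \<or> (\<exists>s. \<sigma> = TS s) \<or> \<sigma> = TW \<or> \<sigma> = TO) \<and> order \<sigma> + 1 \<le> n)
     then H \<sigma>
     else if active \<sigma> \<and> order \<sigma> + 1 = n then
       (case \<sigma> of
          Arr a b \<Rightarrow>
            (if a = TW then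
               {top_rel bg (map H (args \<sigma>))} \<union>
               {foldl (bg_app bg) (I X) ss | X ss. X \<in> Xi \<and>
                  (\<exists>\<tau>s. ty X = foldr Arr \<tau>s \<sigma> \<and> list_all2 (\<lambda>s \<tau>. s \<in> H \<tau>) ss \<tau>s)}
             else fun_space bg (EF bg ty n H Xi I a) (EF bg ty n H Xi I b))
        | _ \<Rightarrow> {})
     else if initial \<sigma> \<and> order \<sigma> = n then
       (case \<sigma> of
          Arr a b \<Rightarrow>
            (if a = TW then
               {f \<in> fun_space bg (bg_W bg) (EF bg ty n H Xi I b).
                  \<forall>z z'. z \<in> bg_W bg \<longrightarrow> z' \<in> bg_W bg \<longrightarrow> bg_le bg z z' \<longrightarrow>
                    le_rel bg (map (EF bg ty n H Xi I) (args b)) (bg_app bg f z) (bg_app bg f z')}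
             else fun_space bg (EF bg ty n H Xi I a) (EF bg ty n H Xi I b))
        | _ \<Rightarrow> {})
     else
       (case \<sigma> of
          Arr a b \<Rightarrow> fun_space bg (EF bg ty n H Xi I a) (EF bg ty n H Xi I b)
        | _ \<Rightarrow> H \<sigma>))"
  by pat_completeness auto
termination
  by (relation "measure (\<lambda>(bg, ty, n, H, Xi, I, \<sigma>). size \<sigma>)")
     (auto dest: args_size)

declare EF.simps [simp del]

text \<open>Sigma_n (Sigma_0 = {} is the symbol set of B_0).\<close>
definition SigN :: "'x set \<Rightarrow> ('x \<Rightarrow> 's ty) \<Rightarrow> nat \<Rightarrow> 'x set" where
  "SigN Sig ty n = (if n = 0 then {} else {X \<in> Sig. order (ty X) \<le> n})"

text \<open>Frame of B_n for a family given by interpretations I n: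
 frame of B_0 is S, frame of B_(n+1) is H[B_n]_(n+1).\<close>
fun Fr :: "('s, 'v) bgs \<Rightarrow> 'x set \<Rightarrow> ('x \<Rightarrow> 's ty) \<Rightarrow> (nat \<Rightarrow> 'x \<Rightarrow> 'v) \<Rightarrow> nat \<Rightarrow> 's ty \<Rightarrow> 'v set" where
  "Fr bg Sig ty I 0 = Std bg"
| "Fr bg Sig ty I (Suc n) = EF bg ty (Suc n) (Fr bg Sig ty I n) (SigN Sig ty n) (I n)"

definition entwined :: "('s, 'v) bgs \<Rightarrow> 'x set \<Rightarrow> ('x \<Rightarrow> 's ty) \<Rightarrow> (nat \<Rightarrow> 'x \<Rightarrow> 'v) \<Rightarrow> bool" where
  "entwined bg Sig ty I = (\<forall>n.
     (\<forall>X\<in>SigN Sig ty (Suc n). I (Suc n) X \<in> Fr bg Sig ty I (Suc n) (ty X)) \<and>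
     (\<forall>X\<in>SigN Sig ty n. I (Suc n) X = I n X))"

end

theory Submission
  imports Defs "HOL-Library.FuncSet"
begin

lemma fun_space_finite:
  assumes "inj (bg_app bg)" "finite A" "finite B"
  shows "finite (fun_space bg A B)"
proof -
  have "inj_on (\<lambda>v. restrict (bg_app bg v) A) (fun_space bg A B)"
  proof (rule inj_onI)
    fix v w assume v: "v \<in> fun_space bg A B" and w: "w \<in> fun_space bg A B"
      and e: "restrict (bg_app bg v) A = restrict (bg_app bg w) A"
    have "bg_app bg v = bg_app bg w"
    proof
      fix x
      have r: "restrict (bg_app bg v) A x = restrict (bg_app bg w) A x" using e by simp
      show "bg_app bg v x = bg_app bg w x"
      proof (cases "x \<in> A")
        case True then show ?thesis using r by simp
      next
        case False then show ?thesis using v w by (simp add: fun_space_def)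
      qed
    qed
    then show "v = w" using assms(1) by (meson injD)
  qed
  moreover have "(\<lambda>v. restrict (bg_app bg v) A) ` fun_space bg A B \<subseteq> PiE A (\<lambda>_. B)"
    by (auto simp: fun_space_def)
  moreover have "finite (PiE A (\<lambda>_. B))" using assms by (simp add: finite_PiE)
  ultimately show ?thesis using finite_imageD finite_subset by metis
qed

lemma args_foldr: "args (foldr Arr ts t) = ts @ args t"
  by (induction ts) auto

lemma foldr_args_res: "foldr Arr (args t) (res t) = t"
  by (induction t) auto

lemma initial_Arr:
  assumes "initial (Arr a b)"
  shows "initial b" "(\<exists>s. a = TS s) \<or> a = TW \<or> initial a"
proof -
  have h: "res b = TO" "O1 (a # args b)" "O2 (a # args b)"
    "\<forall>x\<in>set (a # args b). (\<exists>s. x = TS s) \<or> x = TW \<or> initial x"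
    using assms initial.simps[of "Arr a b"] by auto
  have "O1 (args b)" using h(2) by (auto simp: O1_def split: if_splits)
  moreover have "O2 (args b)"
    unfolding O2_def
  proof (intro allI impI)
    fix j i assume j: "j < length (args b)" "args b ! j = TW" "i < j"
    have "order ((a # args b) ! Suc i) < order (foldr Arr (drop (Suc j) (a # args b)) TO)"
      using h(3) j unfolding O2_def by (metis Suc_less_eq length_Cons nth_Cons_Suc)
    then show "order (args b ! i) < order (foldr Arr (drop j (args b)) TO)" by simp
  qed
  ultimately show "initial b" using h initial.simps[of b] by auto
  show "(\<exists>s. a = TS s) \<or> a = TW \<or> initial a" using h(4) by auto
qed

lemma initial_notTS1: "initial (TS s) \<Longrightarrow> False"
  using initial.simps[of "TS s"] by simp

lemma initial_notTS2: "initial (TW :: 's ty) \<Longrightarrow> False"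
  using initial.simps[of "TW :: 's ty"] by simp

lemmas initial_notTS = initial_notTS1 initial_notTS2

lemma sub_prefix:
  assumes ini: "initial (foldr Arr ts (Arr TW b))" and ib: "initial (Arr TW b)"
    and t: "t \<in> set ts"
  shows "(\<exists>s. t = TS s) \<or> (initial t \<and> order t < order (Arr TW b))"
proof -
  let ?T = "foldr Arr ts (Arr TW b)"
  let ?xs = "ts @ TW # args b"
  have ax: "args ?T = ?xs" by (simp add: args_foldr)
  have hh: "res ?T = TO \<and> O1 (args ?T) \<and> O2 (args ?T) \<and>
     (\<forall>x\<in>set (args ?T). (\<exists>s. x = TS s) \<or> x = TW \<or> initial x)"
    using iffD1[OF initial.simps[of ?T] ini] .
  then have h1: "O1 ?xs" and h2: "O2 ?xs" and h3: "\<forall>x\<in>set ?xs. (\<exists>s. x = TS s) \<or> x = TW \<or> initial x"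
    unfolding ax by blast+
  have rb: "res b = TO"
    using iffD1[OF initial.simps[of "Arr TW b"] ib] by simp
  obtain i where i: "i < length ts" "ts ! i = t" using t by (meson in_set_conv_nth)
  have tw: "?xs ! length ts = TW" by simp
  have lt: "length ts < length ?xs" by simp
  have "\<forall>i<length ts. order (?xs ! i) < order (foldr Arr (drop (length ts) ?xs) TO)"
    using h2 tw lt unfolding O2_def by blast
  then have "order (?xs ! i) < order (foldr Arr (drop (length ts) ?xs) TO)" using i(1) by blast
  moreover have "?xs ! i = t" using i by (simp add: nth_append)
  moreover have "drop (length ts) ?xs = TW # args b" by simp
  moreover have "foldr Arr (TW # args b) TO = Arr TW b"
    using foldr_args_res[of b] rb by simp
  ultimately have o: "order t < order (Arr TW b)" by simp
  have "t \<noteq> TW"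
  proof
    assume "t = TW"
    then have "filter (\<lambda>x. x = TW) ts \<noteq> []" using t by (simp add: filter_empty_conv)
    then have "length (filter (\<lambda>x. x = TW) ts) \<ge> 1" by (simp add: Suc_le_eq)
    then show False using h1 by (simp add: O1_def)
  qed
  moreover have "t \<in> set ?xs" using t by simp
  ultimately show ?thesis using h3 o by blast
qed

lemma finite_ii:
  assumes Xi: "finite Xi" "\<forall>X\<in>Xi. initial (ty X)" and ib: "initial (Arr TW b)"
    and hS: "\<forall>s. finite (H (TS s))"
    and hH: "\<forall>\<tau>. initial \<tau> \<and> order \<tau> < order (Arr TW b) \<longrightarrow> finite (H \<tau>)"
  shows "finite {foldl (bg_app bg) (I X) ss | X ss. X \<in> Xi \<and>
                  (\<exists>\<tau>s. ty X = foldr Arr \<tau>s (Arr TW b) \<and> list_all2 (\<lambda>s \<tau>. s \<in> H \<tau>) ss \<tau>s)}"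
proof -
  define U where "U X = \<Union> (H ` {\<tau>. \<tau> \<in> set (args (ty X)) \<and>
      ((\<exists>s. \<tau> = TS s) \<or> (initial \<tau> \<and> order \<tau> < order (Arr TW b)))})" for X
  have fU: "finite (U X)" for X
    unfolding U_def using hS hH by (intro finite_Union) auto
  have "{foldl (bg_app bg) (I X) ss | X ss. X \<in> Xi \<and>
                  (\<exists>\<tau>s. ty X = foldr Arr \<tau>s (Arr TW b) \<and> list_all2 (\<lambda>s \<tau>. s \<in> H \<tau>) ss \<tau>s)}
     \<subseteq> (\<Union>X\<in>Xi. (\<lambda>ss. foldl (bg_app bg) (I X) ss) ` {ss. set ss \<subseteq> U X \<and> length ss \<le> length (args (ty X))})"
  proof (clarsimp)
    fix X ss \<tau>s assume X: "X \<in> Xi" and ty: "ty X = foldr Arr \<tau>s (Arr TW b)"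
      and la: "list_all2 (\<lambda>s \<tau>. s \<in> H \<tau>) ss \<tau>s"
    have ax: "args (ty X) = \<tau>s @ TW # args b" using ty by (simp add: args_foldr)
    have len: "length ss = length \<tau>s" using la by (simp add: list_all2_lengthD)
    have "set ss \<subseteq> U X"
    proof
      fix s assume "s \<in> set ss"
      then obtain k where k: "k < length ss" "ss ! k = s" by (meson in_set_conv_nth)
      have sH: "s \<in> H (\<tau>s ! k)" using la k by (metis list_all2_conv_all_nth)
      have tin: "\<tau>s ! k \<in> set \<tau>s" using k len by simp
      have "(\<exists>s. \<tau>s ! k = TS s) \<or> (initial (\<tau>s ! k) \<and> order (\<tau>s ! k) < order (Arr TW b))"
        using sub_prefix[OF _ ib tin] Xi(2) X ty by metis
      then show "s \<in> U X" unfolding U_def using sH tin ax by auto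
    qed
    then have "foldl (bg_app bg) (I X) ss \<in> (\<lambda>ss. foldl (bg_app bg) (I X) ss) `
                 {ss. set ss \<subseteq> U X \<and> length ss \<le> length (args (ty X))}"
      using len ax by (intro imageI) simp
    then show "\<exists>x\<in>Xi. foldl (bg_app bg) (I X) ss \<in> (\<lambda>ss. foldl (bg_app bg) (I x) ss) `
                 {ss. set ss \<subseteq> U x \<and> length ss \<le> length (args (ty x))}"
      using X by blast
  qed
  moreover have "finite (\<Union>X\<in>Xi. (\<lambda>ss. foldl (bg_app bg) (I X) ss) ` {ss. set ss \<subseteq> U X \<and> length ss \<le> length (args (ty X))})"
    by (rule finite_UN_I[OF Xi(1)], rule finite_imageI, rule finite_lists_length_le[OF fU])
  ultimately show ?thesis by (rule finite_subset)
qed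

lemma Q:
  assumes inj: "inj (bg_app bg)" and n1: "n \<ge> 1"
    and hS: "\<forall>s. finite (H (TS s))" and hO: "finite (H TO)"
    and hH: "\<forall>\<tau>. initial \<tau> \<and> (order \<tau> + 1 < n \<or> (order \<tau> + 1 = n \<and> inactive \<tau>)) \<longrightarrow> finite (H \<tau>)"
    and Xi: "finite Xi" "\<forall>X\<in>Xi. initial (ty X)"
  shows "initial \<sigma> \<Longrightarrow> (order \<sigma> < n \<or> (order \<sigma> = n \<and> inactive \<sigma>)) \<Longrightarrow> finite (EF bg ty n H Xi I \<sigma>)"
proof (induction \<sigma>)
  case (TS s) then have False using initial_notTS(1) by metis
  then show ?case ..
next
  case TW then have False using initial_notTS(2) by metis
  then show ?case ..
next
  case TO
  have "EF bg ty n H Xi I TO = H TO" using n1 by (subst EF.simps) simp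
  then show ?case using hO by simp
next
  case (Arr a b)
  let ?s = "Arr a b"
  have ib: "initial b" and ia: "(\<exists>s. a = TS s) \<or> a = TW \<or> initial a"
    using initial_Arr[OF Arr.prems(1)] by auto
  have oa: "order a + 1 \<le> order ?s" and ob: "order b \<le> order ?s" by auto
  have EFa: "finite (EF bg ty n H Xi I a)" if "a \<noteq> TW"
  proof -
    { fix s assume "a = TS s"
      then have "EF bg ty n H Xi I a = H (TS s)" using n1 by (subst EF.simps) simp
      then have ?thesis using hS by simp }
    moreover
    { assume "initial a"
      moreover have "order a < n" using Arr.prems(2) oa by linarith
      ultimately have ?thesis using Arr.IH(1) by blast }
    ultimately show ?thesis using ia that by blast
  qed
  show ?case
  proof (cases "order ?s < n")
    case True
    show ?thesis
    proof (cases "order ?s + 2 \<le> n \<or> (inactive ?s \<and> order ?s + 1 \<le> n)")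
      case c: True
      then have "EF bg ty n H Xi I ?s = H ?s" using Arr.prems(1) by (subst EF.simps) (simp add: active_def inactive_def)
      moreover have "finite (H ?s)" using hH Arr.prems(1) c True by auto
      ultimately show ?thesis by simp
    next
      case c: False
      have act: "active ?s" using Arr.prems(1) c True
        unfolding active_def inactive_def by auto
      have on: "order ?s + 1 = n" using c True by auto
      have e: "EF bg ty n H Xi I ?s =
             (if a = TW then
               {top_rel bg (map H (args ?s))} \<union>
               {foldl (bg_app bg) (I X) ss | X ss. X \<in> Xi \<and>
                  (\<exists>\<tau>s. ty X = foldr Arr \<tau>s ?s \<and> list_all2 (\<lambda>s \<tau>. s \<in> H \<tau>) ss \<tau>s)}
             else fun_space bg (EF bg ty n H Xi I a) (EF bg ty n H Xi I b))"
        using c act on Arr.prems(1) by (subst EF.simps) (simp add: active_def inactive_def)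
      show ?thesis
      proof (cases "a = TW")
        case True
        have "finite {foldl (bg_app bg) (I X) ss | X ss. X \<in> Xi \<and>
                  (\<exists>\<tau>s. ty X = foldr Arr \<tau>s (Arr TW b) \<and> list_all2 (\<lambda>s \<tau>. s \<in> H \<tau>) ss \<tau>s)}"
          using Arr.prems(1) True on hS hH Xi
          by (intro finite_ii) auto
        then show ?thesis using e True by simp
      next
        case False
        have "finite (EF bg ty n H Xi I b)" using Arr.IH(2) ib ob True by auto
        then show ?thesis using e False EFa inj fun_space_finite by metis
      qed
    qed
  next
    case False
    then have on: "order ?s = n" and ina: "inactive ?s" using Arr.prems(2) by auto
    have aW: "a \<noteq> TW" using ina by (auto simp add: inactive_def)
    have nact: "\<not> active ?s" using ina by (simp add: active_def inactive_def)
    have e: "EF bg ty n H Xi I ?s = fun_space bg (EF bg ty n H Xi I a) (EF bg ty n H Xi I b)"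
      using on nact aW Arr.prems(1) by (subst EF.simps) (simp add: active_def inactive_def)
    have inb: "inactive b" using ina ib by (simp add: inactive_def)
    have "finite (EF bg ty n H Xi I b)" using Arr.IH(2) ib inb ob on by fastforce
    then show ?thesis using e aW EFa inj fun_space_finite by metis
  qed
qed

lemma Fr_finite:
  fixes bg :: "('s, 'v) bgs" and Sig :: "'x set" and ty :: "'x \<Rightarrow> 's ty" and I :: "nat \<Rightarrow> 'x \<Rightarrow> 'v"
  assumes inj: "inj (bg_app bg)" and fS: "\<forall>s. finite (bg_S bg s)"
    and Sig: "finite Sig" "\<forall>X\<in>Sig. initial (ty X)"
  shows "finite (Fr bg Sig ty I n (TS s)) \<and> finite (Fr bg Sig ty I n TO) \<and>
    (\<forall>\<sigma>. initial \<sigma> \<and> (order \<sigma> < n \<or> (order \<sigma> = n \<and> inactive \<sigma>)) \<longrightarrow> finite (Fr bg Sig ty I n \<sigma>))"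
proof (induction n arbitrary: s)
  case 0
  have "finite (Fr bg Sig ty I 0 (TS s))" using fS by simp
  moreover have "finite (Fr bg Sig ty I 0 TO)" by simp
  moreover have "\<forall>\<sigma>. initial \<sigma> \<and> (order \<sigma> < 0 \<or> (order \<sigma> = 0 \<and> inactive \<sigma>)) \<longrightarrow> finite (Fr bg Sig ty I 0 \<sigma>)"
  proof (intro allI impI)
    fix \<sigma> :: "'s ty" assume that: "initial \<sigma> \<and> (order \<sigma> < 0 \<or> (order \<sigma> = 0 \<and> inactive \<sigma>))"
    have "\<sigma> = TO"
    proof (cases \<sigma>)
      case (TS x) then show ?thesis using that initial_notTS(1) by metis
    next
      case TW then show ?thesis using that initial_notTS(2) by metis
    next
      case TO then show ?thesis .
    next
      case (Arr x y) then show ?thesis using that by simp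
    qed
    then show "finite (Fr bg Sig ty I 0 \<sigma>)" by simp
  qed
  ultimately show ?case by blast
next
  case (Suc m)
  have fX: "finite (SigN Sig ty m)" "\<forall>X\<in>SigN Sig ty m. initial (ty X)"
    using Sig by (auto simp: SigN_def)
  have hS: "\<forall>s. finite (Fr bg Sig ty I m (TS s))" and hO: "finite (Fr bg Sig ty I m TO)"
    using Suc by auto
  have hH: "\<forall>\<tau>. initial \<tau> \<and> (order \<tau> + 1 < Suc m \<or> (order \<tau> + 1 = Suc m \<and> inactive \<tau>)) \<longrightarrow> finite (Fr bg Sig ty I m \<tau>)"
    using Suc by auto
  have "Fr bg Sig ty I (Suc m) (TS s) = Fr bg Sig ty I m (TS s)"
    by (simp, subst EF.simps, simp)
  moreover have "Fr bg Sig ty I (Suc m) TO = Fr bg Sig ty I m TO"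
    by (simp, subst EF.simps, simp)
  moreover have "\<forall>\<sigma>. initial \<sigma> \<and> (order \<sigma> < Suc m \<or> (order \<sigma> = Suc m \<and> inactive \<sigma>)) \<longrightarrow> finite (Fr bg Sig ty I (Suc m) \<sigma>)"
    using Q[OF inj _ hS hO hH fX] by simp
  ultimately show ?case using hS hO by simp
qed

theorem mainTheorem2:
  fixes bg :: "('s, 'v) bgs" and Sig :: "'x set" and ty :: "'x \<Rightarrow> 's ty"
    and I :: "nat \<Rightarrow> 'x \<Rightarrow> 'v" and \<sigma> :: "'s ty" and n :: nat
  assumes "bg_ok bg"
    and "full_upto bg (max (depth \<sigma>) (Max (insert 0 (depth ` ty ` Sig))))"
    and "finite Sig"
    and "\<forall>X\<in>Sig. initial (ty X)"
    and "entwined bg Sig ty I"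
    and "initial \<sigma>"
    and "n \<ge> 1"
    and "n > order \<sigma> \<or> (n = order \<sigma> \<and> inactive \<sigma>)"
  shows "finite (Fr bg Sig ty I n \<sigma>)"
proof -
  have inj: "inj (bg_app bg)" and fS: "\<forall>s. finite (bg_S bg s)"
    using assms(1) unfolding bg_ok_def by blast+
  have all: "\<forall>\<tau>. initial \<tau> \<and> (order \<tau> < n \<or> (order \<tau> = n \<and> inactive \<tau>)) \<longrightarrow> finite (Fr bg Sig ty I n \<tau>)"
    using Fr_finite[OF inj fS assms(3) assms(4), of I n] by blast
  have "order \<sigma> < n \<or> (order \<sigma> = n \<and> inactive \<sigma>)" using assms(8) by linarith
  then show ?thesis using all assms(6) by blast
qed

end
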